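(* Let $n \ge d \ge 1$ be integers. Let $R^{\mathrm{S}}\in\{0,+1,-1\}^{d\times n}$ be a random matrix produced by the S-SSE construction and $R^{\mathrm{SE}}\in\{0,+1,-1\}^{d\times n}$ a random matrix produced by the SE construction (both described in the context). Fix a row index $t\in[d]$, let $\mathbf{Y}$ be the number of nonzero entries in row $t$ of $R^{\mathrm{S}}$, and let $\mathbf{Z}$ be the number of nonzero entries in row $t$ of $R^{\mathrm{SE}}$. Then $$\mathbb{E}(\mathbf{Y})=\mathbb{E}(\mathbf{Z}),\qquad \operatorname{Var}(\mathbf{Y})\le \operatorname{Var}(\mathbf{Z}).$$
   Context: $[k]=\{1,\dots,k\}$. SE (sparse embedding) construction: choose independently for each column $i\in[n]$ a row label $h(i)$ uniformly at random from $[d]$ (i.e. uniform sampling with replacement), and independent Rademacher signs $\sigma_i\in\{+1,-1\}$ (each with probability $1/2$); set $R^{\mathrm{SE}}_{h(i),i}=\sigma_i$ and all other entries $0$. S-SSE (stable sparse subspace embedding) construction: form the multiset $D$ consisting of $[d]$ repeated $\lceil n/d\rceil$ times; draw $n$ elements from $D$ uniformly at random without replacement, giving a sequence $\mathcal{S}=(\mathcal{S}(1),\dots,\mathcal{S}(n))$; independently choose Rademacher signs $\sigma_i\in\{+1,-1\}$ with probability $1/2$ each; set $R^{\mathrm{S}}_{\mathcal{S}(i),i}=\sigma_i$ for $i\in[n]$ and all other entries $0$. In both constructions each column has exactly one nonzero entry. *)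

theory Defs
  imports "HOL-Probability.Probability"
begin

text \<open>Matrices in {0,+1,-1}^(d x n) are modelled as functions
  row index \<Rightarrow> column index \<Rightarrow> int, with rows in {1..d} and columns in {1..n}.\<close>

definition sign_of :: "bool \<Rightarrow> int" where
  "sign_of b = (if b then 1 else -1)"

definition col_matrix :: "nat \<Rightarrow> (nat \<Rightarrow> nat) \<Rightarrow> (nat \<Rightarrow> bool) \<Rightarrow> nat \<Rightarrow> nat \<Rightarrow> int" where
  "col_matrix n h \<sigma> = (\<lambda>r c. if c \<in> {1..n} \<and> h c = r then sign_of (\<sigma> c) else 0)"

definition rademacher_signs :: "nat \<Rightarrow> (nat \<Rightarrow> bool) pmf" where
  "rademacher_signs n = Pi_pmf {1..n} False (\<lambda>_. pmf_of_set (UNIV :: bool set))"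

definition SE_pmf :: "nat \<Rightarrow> nat \<Rightarrow> (nat \<Rightarrow> nat \<Rightarrow> int) pmf" where
  "SE_pmf d n =
     map_pmf (\<lambda>(h, \<sigma>). col_matrix n h \<sigma>)
       (pair_pmf (Pi_pmf {1..n} 0 (\<lambda>_. pmf_of_set {1..d})) (rademacher_signs n))"

text \<open>The multiset D: [d] repeated ceil(n/d) times, listed as a list.\<close>
definition D_list :: "nat \<Rightarrow> nat \<Rightarrow> nat list" where
  "D_list d n = concat (replicate (nat \<lceil>real n / real d\<rceil>) [1..<d+1])"

text \<open>Drawing n elements of D uniformly without replacement: an injective
  assignment of distinct positions of D to columns 1..n, chosen uniformly.\<close>
definition S_seq_pmf :: "nat \<Rightarrow> nat \<Rightarrow> (nat \<Rightarrow> nat) pmf" where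
  "S_seq_pmf d n =
     map_pmf (\<lambda>f i. D_list d n ! f i)
       (pmf_of_set {f. f \<in> {1..n} \<rightarrow>\<^sub>E {0..<length (D_list d n)} \<and> inj_on f {1..n}})"

definition SSSE_pmf :: "nat \<Rightarrow> nat \<Rightarrow> (nat \<Rightarrow> nat \<Rightarrow> int) pmf" where
  "SSSE_pmf d n =
     map_pmf (\<lambda>(S, \<sigma>). col_matrix n S \<sigma>) (pair_pmf (S_seq_pmf d n) (rademacher_signs n))"

definition row_nnz :: "nat \<Rightarrow> nat \<Rightarrow> (nat \<Rightarrow> nat \<Rightarrow> int) \<Rightarrow> real" where
  "row_nnz n t R = real (card {c \<in> {1..n}. R t c \<noteq> 0})"

end

theory Submission
  imports Defs
begin


lemma card_as_sum: "finite C \<Longrightarrow> real (card {c\<in>C. P c}) = (\<Sum>c\<in>C. if P c then 1 else 0)"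
  by (simp add: sum.If_cases Int_def)

lemma uniform_moments:
  fixes F :: "('a \<Rightarrow> 'b) set" and C :: "'a set" and a b :: real
  assumes fF: "finite F" and ne: "F \<noteq> {}" and fC: "finite C"
    and ha: "\<And>c. c \<in> C \<Longrightarrow> real (card {f\<in>F. P f c}) = a"
    and hb: "\<And>c c'. c \<in> C \<Longrightarrow> c' \<in> C \<Longrightarrow> c \<noteq> c' \<Longrightarrow> real (card {f\<in>F. P f c \<and> P f c'}) = b"
  shows "measure_pmf.expectation (pmf_of_set F) (\<lambda>f. real (card {c\<in>C. P f c})) = card C * a / card F"
    and "measure_pmf.expectation (pmf_of_set F) (\<lambda>f. (real (card {c\<in>C. P f c}))^2)
           = (card C * a + card C * (card C - 1) * b) / card F"
proof -
  have "(\<Sum>f\<in>F. real (card {c\<in>C. P f c})) = (\<Sum>f\<in>F. \<Sum>c\<in>C. if P f c then 1 else 0)"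
    using fC by (simp add: card_as_sum)
  also have "\<dots> = (\<Sum>c\<in>C. \<Sum>f\<in>F. if P f c then 1 else 0)" by (rule sum.swap)
  also have "\<dots> = (\<Sum>c\<in>C. a)"
    using ha fF by (intro sum.cong refl) (simp add: card_as_sum[symmetric])
  finally have s1: "(\<Sum>f\<in>F. real (card {c\<in>C. P f c})) = card C * a" by simp
  show "measure_pmf.expectation (pmf_of_set F) (\<lambda>f. real (card {c\<in>C. P f c})) = card C * a / card F"
    using ne fF by (simp add: integral_pmf_of_set s1)
  have sq: "(real (card {c\<in>C. P f c}))^2 = (\<Sum>c\<in>C. \<Sum>c'\<in>C. if P f c \<and> P f c' then 1 else 0)" for f
  proof -
    have "(real (card {c\<in>C. P f c}))^2 = (\<Sum>c\<in>C. if P f c then 1 else 0) * (\<Sum>c'\<in>C. if P f c' then 1 else 0)"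
      using fC by (simp add: card_as_sum power2_eq_square)
    also have "\<dots> = (\<Sum>c\<in>C. \<Sum>c'\<in>C. if P f c \<and> P f c' then 1 else 0)"
      unfolding sum_product by (intro sum.cong refl) simp
    finally show ?thesis .
  qed
  have "(\<Sum>f\<in>F. (real (card {c\<in>C. P f c}))^2) = (\<Sum>f\<in>F. \<Sum>c\<in>C. \<Sum>c'\<in>C. if P f c \<and> P f c' then 1 else 0)"
    by (simp add: sq)
  also have "\<dots> = (\<Sum>c\<in>C. \<Sum>c'\<in>C. \<Sum>f\<in>F. if P f c \<and> P f c' then 1 else 0)"
    by (subst sum.swap, subst sum.swap, simp)
  also have "\<dots> = (\<Sum>c\<in>C. a + (card C - 1) * b)"
  proof (intro sum.cong refl)
    fix c assume c: "c \<in> C"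
    have "(\<Sum>c'\<in>C. \<Sum>f\<in>F. if P f c \<and> P f c' then 1 else 0)
        = (\<Sum>f\<in>F. if P f c \<and> P f c then 1 else 0) + (\<Sum>c'\<in>C-{c}. \<Sum>f\<in>F. if P f c \<and> P f c' then (1::real) else 0)"
      using c fC by (simp add: sum.remove)
    also have "(\<Sum>f\<in>F. if P f c \<and> P f c then 1 else 0) = a"
      using ha[OF c] fF by (simp add: card_as_sum)
    also have "(\<Sum>c'\<in>C-{c}. \<Sum>f\<in>F. if P f c \<and> P f c' then (1::real) else 0) = (\<Sum>c'\<in>C-{c}. b)"
      using hb c fF by (intro sum.cong refl) (auto simp add: card_as_sum[symmetric])
    also have "(\<Sum>c'\<in>C-{c}. b) = (card C - 1) * b"
      using c fC by (simp add: of_nat_diff)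
    finally show "(\<Sum>c'\<in>C. \<Sum>f\<in>F. if P f c \<and> P f c' then 1 else 0) = a + (card C - 1) * b" .
  qed
  also have "\<dots> = card C * a + card C * (card C - 1) * b"
    by (cases "card C") (simp_all add: algebra_simps)
  finally have s2: "(\<Sum>f\<in>F. (real (card {c\<in>C. P f c}))^2) = card C * a + card C * (card C - 1) * b" .
  show "measure_pmf.expectation (pmf_of_set F) (\<lambda>f. (real (card {c\<in>C. P f c}))^2)
           = (card C * a + card C * (card C - 1) * b) / card F"
    using ne fF by (simp add: integral_pmf_of_set s2)
qed




lemma rn_col: "row_nnz n t (col_matrix n h \<sigma>) = real (card {c\<in>{1..n}. h c = t})"
  unfolding row_nnz_def col_matrix_def sign_of_def
  by (intro arg_cong[where f="\<lambda>x. real (card x)"]) auto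

lemma exp_pair_fst: "measure_pmf.expectation (pair_pmf A B) (\<lambda>x. (g (fst x)::real)) = measure_pmf.expectation A g"
proof -
  have "measure_pmf.expectation (map_pmf fst (pair_pmf A B)) g = measure_pmf.expectation (pair_pmf A B) (\<lambda>x. g (fst x))"
    by simp
  then show ?thesis by (simp add: map_fst_pair_pmf)
qed

definition GSE :: "nat \<Rightarrow> nat \<Rightarrow> (nat \<Rightarrow> nat) set" where
  "GSE d n = PiE_dflt {1..n} 0 (\<lambda>_. {1..d})"

lemma exp_SE:
  fixes g :: "real \<Rightarrow> real"
  assumes "1 \<le> d"
  shows "measure_pmf.expectation (SE_pmf d n) (\<lambda>R. g (row_nnz n t R))
     = measure_pmf.expectation (pmf_of_set (GSE d n)) (\<lambda>h. g (real (card {c\<in>{1..n}. h c = t})))"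
proof -
  have "measure_pmf.expectation (SE_pmf d n) (\<lambda>R. g (row_nnz n t R))
     = measure_pmf.expectation (pair_pmf (Pi_pmf {1..n} 0 (\<lambda>_. pmf_of_set {1..d})) (rademacher_signs n))
         (\<lambda>x. g (real (card {c\<in>{1..n}. fst x c = t})))"
    unfolding SE_pmf_def by (simp add: case_prod_beta rn_col)
  also have "\<dots> = measure_pmf.expectation (Pi_pmf {1..n} 0 (\<lambda>_. pmf_of_set {1..d})) (\<lambda>h. g (real (card {c\<in>{1..n}. h c = t})))"
    by (rule exp_pair_fst)
  also have "Pi_pmf {1..n} 0 (\<lambda>_. pmf_of_set {1..d}) = pmf_of_set (GSE d n)"
    unfolding GSE_def using assms by (intro Pi_pmf_of_set) auto
  finally show ?thesis .
qed

definition FS :: "nat \<Rightarrow> nat \<Rightarrow> (nat \<Rightarrow> nat) set" where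
  "FS d n = {f. f \<in> {1..n} \<rightarrow>\<^sub>E {0..<length (D_list d n)} \<and> inj_on f {1..n}}"

lemma exp_SSSE:
  fixes g :: "real \<Rightarrow> real"
  shows "measure_pmf.expectation (SSSE_pmf d n) (\<lambda>R. g (row_nnz n t R))
     = measure_pmf.expectation (pmf_of_set (FS d n)) (\<lambda>f. g (real (card {c\<in>{1..n}. D_list d n ! f c = t})))"
proof -
  have "measure_pmf.expectation (SSSE_pmf d n) (\<lambda>R. g (row_nnz n t R))
     = measure_pmf.expectation (pair_pmf (S_seq_pmf d n) (rademacher_signs n))
         (\<lambda>x. g (real (card {c\<in>{1..n}. fst x c = t})))"
    unfolding SSSE_pmf_def by (simp add: case_prod_beta rn_col)
  also have "\<dots> = measure_pmf.expectation (S_seq_pmf d n) (\<lambda>h. g (real (card {c\<in>{1..n}. h c = t})))"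
    by (rule exp_pair_fst)
  also have "\<dots> = measure_pmf.expectation (pmf_of_set (FS d n)) (\<lambda>f. g (real (card {c\<in>{1..n}. D_list d n ! f c = t})))"
    unfolding S_seq_pmf_def FS_def by simp
  finally show ?thesis .
qed




lemma GSE_count:
  assumes S: "S \<subseteq> {1..n}" and t: "t \<in> {1..d}"
  shows "card {h\<in>GSE d n. \<forall>c\<in>S. h c = t} = d ^ (n - card S)"
proof -
  have "{h\<in>GSE d n. \<forall>c\<in>S. h c = t} = PiE_dflt {1..n} 0 (\<lambda>x. if x\<in>S then {t} else {1..d})"
    unfolding GSE_def PiE_dflt_def using S t by (auto split: if_splits)
  also have "card \<dots> = (\<Prod>x\<in>{1..n}. card (if x\<in>S then {t} else {1..d}))"
    by (rule card_PiE_dflt) auto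
  also have "\<dots> = (\<Prod>x\<in>{1..n}. if x\<in>S then 1 else d)"
    by (intro prod.cong refl) auto
  also have "\<dots> = (\<Prod>x\<in>{1..n} - S. d)"
    using S by (simp add: prod.If_cases Diff_eq Int_absorb1 Int_commute)
  also have "\<dots> = d ^ (n - card S)"
    using S by (simp add: card_Diff_subset finite_subset)
  finally show ?thesis .
qed

lemma GSE_card: "card (GSE d n) = d ^ n"
  unfolding GSE_def by (subst card_PiE_dflt) auto

lemma GSE_ne: "1 \<le> d \<Longrightarrow> GSE d n \<noteq> {}"
  unfolding GSE_def by simp

lemma SE_moments:
  assumes d: "1 \<le> d" and t: "t \<in> {1..d}"
  shows "measure_pmf.expectation (SE_pmf d n) (row_nnz n t) = n / d"
    and "measure_pmf.variance (SE_pmf d n) (row_nnz n t) = n / d - n / (real d)^2"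
proof -
  define a :: real where "a = d ^ (n - 1)"
  define b :: real where "b = d ^ (n - 2)"
  have ha: "real (card {h\<in>GSE d n. h c = t}) = a" if c: "c \<in> {1..n}" for c
  proof -
    have "{h\<in>GSE d n. h c = t} = {h\<in>GSE d n. \<forall>c'\<in>{c}. h c' = t}" by auto
    then show ?thesis using GSE_count[of "{c}" n t d] c t by (simp add: a_def)
  qed
  have hb: "real (card {h\<in>GSE d n. h c = t \<and> h c' = t}) = b"
    if c: "c \<in> {1..n}" "c' \<in> {1..n}" "c \<noteq> c'" for c c'
  proof -
    have "{h\<in>GSE d n. h c = t \<and> h c' = t} = {h\<in>GSE d n. \<forall>x\<in>{c,c'}. h x = t}" by auto
    then show ?thesis using GSE_count[of "{c,c'}" n t d] c t by (simp add: b_def numeral_2_eq_2)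
  qed
  have fin: "finite (GSE d n)" unfolding GSE_def by auto
  note M = uniform_moments[OF fin GSE_ne[OF d] finite_atLeastAtMost, where P="\<lambda>h c. h c = t" and a=a and b=b, OF ha hb]
  have E1: "measure_pmf.expectation (SE_pmf d n) (row_nnz n t) = n * a / d ^ n"
    using exp_SE[OF d, where g="\<lambda>x. x" and n=n and t=t] M(1) by (simp add: GSE_card)
  have E2: "measure_pmf.expectation (SE_pmf d n) (\<lambda>R. (row_nnz n t R)^2) = (n * a + n * (n - 1) * b) / d ^ n"
    using exp_SE[OF d, where g="\<lambda>x. x^2" and n=n and t=t] M(2) by (simp add: GSE_card)
  have q1: "n * a / d ^ n = n / d"
  proof (cases n)
    case 0 then show ?thesis using d by (simp add: a_def)
  next
    case (Suc m) then show ?thesis using d by (simp add: a_def field_simps)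
  qed
  have q2: "n * (n - 1) * b / d ^ n = n * (n - 1) / (real d)^2"
  proof (cases "n \<ge> 2")
    case True
    then obtain m where "n = m + 2" by (metis add.commute le_Suc_ex)
    then show ?thesis using d by (simp add: b_def field_simps power2_eq_square)
  next
    case False then have "n = 0 \<or> n = 1" by auto
    then show ?thesis by auto
  qed
  show ex: "measure_pmf.expectation (SE_pmf d n) (row_nnz n t) = n / d"
    using E1 q1 by simp
  have fs: "finite (set_pmf (pmf_of_set (GSE d n)))" using fin GSE_ne[OF d] by simp
  have "measure_pmf.variance (SE_pmf d n) (row_nnz n t)
       = measure_pmf.variance (pmf_of_set (GSE d n)) (\<lambda>h. real (card {c\<in>{1..n}. h c = t}))"
    using exp_SE[OF d, where g="\<lambda>x. (x - n / d)^2" and n=n and t=t] exp_SE[OF d, where g="\<lambda>x. x" and n=n and t=t] ex by simp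
  also have "\<dots> = measure_pmf.expectation (pmf_of_set (GSE d n)) (\<lambda>h. (real (card {c\<in>{1..n}. h c = t}))^2)
     - (measure_pmf.expectation (pmf_of_set (GSE d n)) (\<lambda>h. real (card {c\<in>{1..n}. h c = t})))^2"
    by (rule measure_pmf.variance_eq) (auto intro: integrable_measure_pmf_finite[OF fs])
  also have "\<dots> = n / d + n * (n - 1) / (real d)^2 - (n / d)^2"
    using M q1 q2 ex exp_SE[OF d, where g="\<lambda>x. x" and n=n and t=t] by (simp add: GSE_card add_divide_distrib)
  also have "\<dots> = n / d - n / (real d)^2"
    using d by (cases n) (simp_all add: field_simps power2_eq_square)
  finally have V: "measure_pmf.variance (SE_pmf d n) (row_nnz n t) = n / d - n / (real d)^2" .
  then show "measure_pmf.variance (SE_pmf d n) (row_nnz n t) = n / d - n / (real d)^2" .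
qed




definition sw :: "nat \<Rightarrow> nat \<Rightarrow> nat \<Rightarrow> nat" where
  "sw p q x = (if x = p then q else if x = q then p else x)"

lemma sw_sw[simp]: "sw p q (sw p q x) = x" by (simp add: sw_def)
lemma sw_eq_iff: "sw p q y = z \<longleftrightarrow> y = sw p q z" by (auto simp add: sw_def)

lemma sw_bij: "p < L \<Longrightarrow> q < L \<Longrightarrow> bij_betw (sw p q) {0..<L} {0..<L}"
  by (rule bij_betw_byWitness[where f'="sw p q"]) (auto simp: sw_def)

definition Inj :: "'a set \<Rightarrow> nat \<Rightarrow> ('a \<Rightarrow> nat) set" where
  "Inj C L = {f. f \<in> C \<rightarrow>\<^sub>E {0..<L} \<and> inj_on f C}"

lemma Inj_finite: "finite C \<Longrightarrow> finite (Inj C L)"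
  unfolding Inj_def by (rule finite_subset[OF _ finite_PiE[of C "\<lambda>_. {0..<L}"]]) auto

lemma perm_count:
  assumes fC: "finite C" and \<pi>: "bij_betw \<pi> {0..<L} {0..<L}"
  shows "card {f\<in>Inj C L. Q (\<lambda>x. if x \<in> C then \<pi> (f x) else undefined)} = card {f\<in>Inj C L. Q f}"
proof -
  define \<Phi> where "\<Phi> f = (\<lambda>x. if x \<in> C then \<pi> (f x) else undefined)" for f :: "'a \<Rightarrow> nat"
  let ?F = "Inj C L"
  have inj\<pi>: "inj_on \<pi> {0..<L}" and im\<pi>: "\<pi> ` {0..<L} = {0..<L}" using \<pi> by (auto simp: bij_betw_def)
  have sub: "\<Phi> ` ?F \<subseteq> ?F"
  proof
    fix g assume "g \<in> \<Phi> ` ?F"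
    then obtain f where f: "f \<in> ?F" and g: "g = \<Phi> f" by auto
    have "inj_on (\<lambda>x. \<pi> (f x)) C"
      using f inj\<pi> unfolding Inj_def inj_on_def by (auto simp: PiE_def Pi_def)
    then show "g \<in> ?F" using f im\<pi> unfolding g \<Phi>_def Inj_def inj_on_def
      by (auto simp: PiE_def Pi_def extensional_def)
  qed
  have inj: "inj_on \<Phi> ?F"
  proof (rule inj_onI)
    fix f g assume f: "f \<in> ?F" and g: "g \<in> ?F" and e: "\<Phi> f = \<Phi> g"
    show "f = g"
    proof
      fix x show "f x = g x"
      proof (cases "x \<in> C")
        case True
        then have "\<pi> (f x) = \<pi> (g x)" using fun_cong[OF e, of x] unfolding \<Phi>_def by simp
        moreover have "f x \<in> {0..<L}" "g x \<in> {0..<L}" using f g True unfolding Inj_def by auto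
        ultimately show ?thesis using inj_onD[OF inj\<pi>] by blast
      next
        case False then show ?thesis using f g unfolding Inj_def by (auto simp: PiE_def extensional_def)
      qed
    qed
  qed
  have eq: "\<Phi> ` ?F = ?F"
  proof (rule card_subset_eq[OF Inj_finite[OF fC] sub])
    show "card (\<Phi> ` ?F) = card ?F" using inj by (rule card_image)
  qed
  have im: "\<Phi> ` {f\<in>?F. Q (\<Phi> f)} = {g\<in>?F. Q g}"
  proof
    show "\<Phi> ` {f\<in>?F. Q (\<Phi> f)} \<subseteq> {g\<in>?F. Q g}" using sub by auto
    show "{g\<in>?F. Q g} \<subseteq> \<Phi> ` {f\<in>?F. Q (\<Phi> f)}"
    proof
      fix g assume g: "g \<in> {g\<in>?F. Q g}"
      then have "g \<in> \<Phi> ` ?F" using eq by simp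
      then obtain f where "f \<in> ?F" "g = \<Phi> f" by auto
      then show "g \<in> \<Phi> ` {f\<in>?F. Q (\<Phi> f)}" using g by auto
    qed
  qed
  have ij: "inj_on \<Phi> {f\<in>?F. Q (\<Phi> f)}" by (rule inj_on_subset[OF inj]) blast
  have "card {f\<in>?F. Q (\<Phi> f)} = card {g\<in>?F. Q g}" using card_image[OF ij] unfolding im by (rule sym)
  then show ?thesis unfolding \<Phi>_def .
qed


lemma G1:
  assumes "finite F" "finite A"
  shows "real (card {f\<in>F. f c \<in> A}) = (\<Sum>p\<in>A. real (card {f\<in>F. f c = p}))"
proof -
  have "real (card {f\<in>F. f c \<in> A}) = (\<Sum>f\<in>F. if f c \<in> A then 1 else 0)"
    using assms by (simp add: card_as_sum)
  also have "\<dots> = (\<Sum>f\<in>F. \<Sum>p\<in>A. if f c = p then 1 else 0)"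
    using assms by (intro sum.cong refl) (simp add: sum.delta)
  also have "\<dots> = (\<Sum>p\<in>A. \<Sum>f\<in>F. if f c = p then 1 else 0)" by (rule sum.swap)
  also have "\<dots> = (\<Sum>p\<in>A. real (card {f\<in>F. f c = p}))"
    using assms by (intro sum.cong refl) (simp add: card_as_sum)
  finally show ?thesis .
qed

lemma sum_if_conj: "finite B \<Longrightarrow> (\<Sum>p'\<in>B. if P \<and> x = p' then 1 else 0) = (if P \<and> x \<in> B then (1::real) else 0)"
  by (cases P) (simp_all add: sum.delta)

lemma G2:
  assumes "finite F" "finite A" "\<And>f. f \<in> F \<Longrightarrow> f c \<noteq> f c'"
  shows "real (card {f\<in>F. f c \<in> A \<and> f c' \<in> A}) = (\<Sum>p\<in>A. \<Sum>p'\<in>A-{p}. real (card {f\<in>F. f c = p \<and> f c' = p'}))"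
proof -
  have "real (card {f\<in>F. f c \<in> A \<and> f c' \<in> A}) = (\<Sum>f\<in>F. if f c \<in> A \<and> f c' \<in> A then 1 else 0)"
    using assms by (simp add: card_as_sum)
  also have "\<dots> = (\<Sum>f\<in>F. \<Sum>p\<in>A. \<Sum>p'\<in>A-{p}. if f c = p \<and> f c' = p' then 1 else 0)"
  proof (intro sum.cong refl)
    fix f assume f: "f \<in> F"
    have "(\<Sum>p\<in>A. \<Sum>p'\<in>A-{p}. if f c = p \<and> f c' = p' then 1 else 0)
        = (\<Sum>p\<in>A. if f c = p \<and> f c' \<in> A - {p} then (1::real) else 0)"
      using assms by (intro sum.cong refl) (simp add: sum_if_conj)
    also have "\<dots> = (\<Sum>p\<in>A. if f c = p then (if f c' \<in> A - {f c} then (1::real) else 0) else 0)"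
      by (intro sum.cong refl) auto
    also have "\<dots> = (if f c \<in> A \<and> f c' \<in> A then 1 else 0)"
      using assms(2) assms(3)[OF f] by (simp add: sum.delta)
    finally show "(if f c \<in> A \<and> f c' \<in> A then 1 else 0) = (\<Sum>p\<in>A. \<Sum>p'\<in>A-{p}. if f c = p \<and> f c' = p' then (1::real) else 0)" by simp
  qed
  also have "\<dots> = (\<Sum>p\<in>A. \<Sum>f\<in>F. \<Sum>p'\<in>A-{p}. if f c = p \<and> f c' = p' then 1 else 0)" by (rule sum.swap)
  also have "\<dots> = (\<Sum>p\<in>A. \<Sum>p'\<in>A-{p}. \<Sum>f\<in>F. if f c = p \<and> f c' = p' then 1 else 0)"
    by (intro sum.cong refl) (rule sum.swap)
  also have "\<dots> = (\<Sum>p\<in>A. \<Sum>p'\<in>A-{p}. real (card {f\<in>F. f c = p \<and> f c' = p'}))"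
    using assms by (intro sum.cong refl) (simp add: card_as_sum)
  finally show ?thesis .
qed

lemma single_eq:
  assumes fC: "finite C" and c: "c \<in> C" and p: "p < L" and q: "q < L"
  shows "card {f\<in>Inj C L. f c = p} = card {f\<in>Inj C L. f c = q}"
proof -
  have "card {f\<in>Inj C L. (\<lambda>g. g c = q) (\<lambda>x. if x \<in> C then sw p q (f x) else undefined)} = card {f\<in>Inj C L. (\<lambda>g. g c = q) f}"
    by (rule perm_count[OF fC sw_bij[OF p q]])
  moreover have "{f\<in>Inj C L. (\<lambda>g. g c = q) (\<lambda>x. if x \<in> C then sw p q (f x) else undefined)} = {f\<in>Inj C L. f c = p}"
    using c by (auto simp: sw_def)
  ultimately show ?thesis by simp
qed

lemma Inj_range: "f \<in> Inj C L \<Longrightarrow> c \<in> C \<Longrightarrow> f c < L"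
  unfolding Inj_def by auto

lemma single_val:
  assumes fC: "finite C" and c: "c \<in> C" and A: "A \<subseteq> {0..<L}"
  shows "real (card {f\<in>Inj C L. f c \<in> A}) * L = card A * card (Inj C L)"
proof (cases "L = 0")
  case True then show ?thesis using A by simp
next
  case False
  define m where "m = real (card {f\<in>Inj C L. f c = 0})"
  have all: "real (card {f\<in>Inj C L. f c = p}) = m" if "p \<in> {0..<L}" for p
    using single_eq[OF fC c, of p L 0] that False unfolding m_def by simp
  have fA: "finite A" by (rule finite_subset[OF A finite_atLeastLessThan])
  have "real (card {f\<in>Inj C L. f c \<in> A}) = card A * m"
    using G1[OF Inj_finite[OF fC] fA, where c=c] all A by (simp add: subset_iff)
  moreover have "real (card {f\<in>Inj C L. f c \<in> {0..<L}}) = L * m"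
    using G1[OF Inj_finite[OF fC] finite_atLeastLessThan[of 0 L], where c=c] all by simp
  moreover have "{f\<in>Inj C L. f c \<in> {0..<L}} = Inj C L" using Inj_range c by auto
  ultimately show ?thesis by simp
qed


lemma pair_eq:
  assumes fC: "finite C" and c: "c \<in> C" "c' \<in> C"
    and p: "p < L" "p' < L" "p \<noteq> p'" and q: "q < L" "q' < L" "q \<noteq> q'"
  shows "card {f\<in>Inj C L. f c = p \<and> f c' = p'} = card {f\<in>Inj C L. f c = q \<and> f c' = q'}"
proof -
  define s where "s = sw p q p'"
  have sL: "s < L" using p q unfolding s_def sw_def by auto
  have sq: "s \<noteq> q" using p unfolding s_def sw_def by auto
  define \<pi> where "\<pi> = sw s q' \<circ> sw p q"
  have bij: "bij_betw \<pi> {0..<L} {0..<L}"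
    unfolding \<pi>_def by (rule bij_betw_trans[OF sw_bij[OF p(1) q(1)] sw_bij[OF sL q(2)]])
  have e1: "\<pi> y = q \<longleftrightarrow> y = p" for y
    using sq q(3) unfolding \<pi>_def by (auto simp: sw_def split: if_splits)
  have e2: "\<pi> y = q' \<longleftrightarrow> y = p'" for y
    using sq q(3) p(3) unfolding \<pi>_def s_def by (auto simp: sw_def split: if_splits)
  have "card {f\<in>Inj C L. (\<lambda>g. g c = q \<and> g c' = q') (\<lambda>x. if x \<in> C then \<pi> (f x) else undefined)}
      = card {f\<in>Inj C L. (\<lambda>g. g c = q \<and> g c' = q') f}"
    by (rule perm_count[OF fC bij])
  moreover have "{f\<in>Inj C L. (\<lambda>g. g c = q \<and> g c' = q') (\<lambda>x. if x \<in> C then \<pi> (f x) else undefined)}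
      = {f\<in>Inj C L. f c = p \<and> f c' = p'}"
    using c e1 e2 by auto
  ultimately show ?thesis by simp
qed

lemma Inj_ne: "f \<in> Inj C L \<Longrightarrow> c \<in> C \<Longrightarrow> c' \<in> C \<Longrightarrow> c \<noteq> c' \<Longrightarrow> f c \<noteq> f c'"
  unfolding Inj_def inj_on_def by blast

lemma sum_pairs_const:
  assumes "finite A" "\<And>p p'. p \<in> A \<Longrightarrow> p' \<in> A \<Longrightarrow> p \<noteq> p' \<Longrightarrow> g p p' = (m::real)"
  shows "(\<Sum>p\<in>A. \<Sum>p'\<in>A-{p}. g p p') = real (card A) * real (card A - 1) * m"
proof -
  have "(\<Sum>p\<in>A. \<Sum>p'\<in>A-{p}. g p p') = (\<Sum>p\<in>A. real (card A - 1) * m)"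
  proof (intro sum.cong refl)
    fix p assume p: "p \<in> A"
    have "(\<Sum>p'\<in>A-{p}. g p p') = (\<Sum>p'\<in>A-{p}. m)"
      using assms(2) p by (intro sum.cong refl) auto
    also have "\<dots> = real (card A - 1) * m" using p assms(1) by (simp add: card_Diff_singleton)
    finally show "(\<Sum>p'\<in>A-{p}. g p p') = real (card A - 1) * m" .
  qed
  also have "\<dots> = real (card A) * real (card A - 1) * m" by simp
  finally show ?thesis .
qed


lemma pair_val:
  assumes fC: "finite C" and c: "c \<in> C" "c' \<in> C" "c \<noteq> c'" and A: "A \<subseteq> {0..<L}"
  shows "real (card {f\<in>Inj C L. f c \<in> A \<and> f c' \<in> A}) * (L * (L - 1)) = card A * (card A - 1) * card (Inj C L)"
proof (cases "L < 2")
  case True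
  have "card A \<le> L" using A card_mono[OF finite_atLeastLessThan A] by simp
  then have "card A = 0 \<or> card A = 1" "L = 0 \<or> L = 1" using True by auto
  then show ?thesis by auto
next
  case False
  define m where "m = real (card {f\<in>Inj C L. f c = 0 \<and> f c' = 1})"
  have all: "real (card {f\<in>Inj C L. f c = p \<and> f c' = p'}) = m" if "p \<in> {0..<L}" "p' \<in> {0..<L}" "p \<noteq> p'" for p p'
  proof -
    have "card {f\<in>Inj C L. f c = p \<and> f c' = p'} = card {f\<in>Inj C L. f c = 0 \<and> f c' = 1}"
      by (rule pair_eq[OF fC c(1,2)]) (use that False in auto)
    then show ?thesis unfolding m_def by simp
  qed
  have fA: "finite A" by (rule finite_subset[OF A finite_atLeastLessThan])
  have ne: "\<And>f. f \<in> Inj C L \<Longrightarrow> f c \<noteq> f c'" by (rule Inj_ne[OF _ c])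
  have "real (card {f\<in>Inj C L. f c \<in> A \<and> f c' \<in> A}) = (\<Sum>p\<in>A. \<Sum>p'\<in>A-{p}. real (card {f\<in>Inj C L. f c = p \<and> f c' = p'}))"
    by (rule G2[OF Inj_finite[OF fC] fA ne])
  also have "\<dots> = real (card A) * real (card A - 1) * m"
    by (rule sum_pairs_const[OF fA], rule all) (use A in auto)
  finally have 1: "real (card {f\<in>Inj C L. f c \<in> A \<and> f c' \<in> A}) = real (card A) * real (card A - 1) * m" .
  have "real (card {f\<in>Inj C L. f c \<in> {0..<L} \<and> f c' \<in> {0..<L}}) = (\<Sum>p\<in>{0..<L}. \<Sum>p'\<in>{0..<L}-{p}. real (card {f\<in>Inj C L. f c = p \<and> f c' = p'}))"
    by (rule G2[OF Inj_finite[OF fC] finite_atLeastLessThan ne])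
  also have "\<dots> = real (card {0..<L}) * real (card {0..<L} - 1) * m"
    by (rule sum_pairs_const[OF finite_atLeastLessThan]) (use all in auto)
  finally have 2: "real (card {f\<in>Inj C L. f c \<in> {0..<L} \<and> f c' \<in> {0..<L}}) = real L * real (L - 1) * m" by simp
  have 3: "{f\<in>Inj C L. f c \<in> {0..<L} \<and> f c' \<in> {0..<L}} = Inj C L" using Inj_range c by auto
  have 4: "real (L - Suc 0) = real L - 1" using False by (simp add: of_nat_diff)
  show ?thesis
  proof (cases "card A = 0")
    case True then show ?thesis using 1 by simp
  next
    case F: False
    have 5: "real (card A - Suc 0) = real (card A) - 1" using F by (simp add: of_nat_diff)
    have X: "real (card {f\<in>Inj C L. f c \<in> A \<and> f c' \<in> A}) = m * (real (card A) * (real (card A) - 1))"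
      using 1 5 by simp
    have Fc: "real (card (Inj C L)) = m * (real L * (real L - 1))" using 2 4 unfolding 3 by simp
    show ?thesis unfolding 3 X by (simp add: Fc algebra_simps)
  qed
qed




lemma Dlen: "length (D_list d n) = nat \<lceil>real n / real d\<rceil> * d"
  unfolding D_list_def by (simp add: length_concat sum_list_replicate)

lemma concat_rep_nth: "j < k * d \<Longrightarrow> concat (replicate k [1..<d+1]) ! j = j mod d + 1"
proof (induction k arbitrary: j)
  case 0 then show ?case by simp
next
  case (Suc k)
  show ?case
  proof (cases "j < d")
    case True
    have "concat (replicate (Suc k) [1..<d+1]) = [1..<d+1] @ concat (replicate k [1..<d+1])" by simp
    moreover have "length [1..<d+1] = d" by simp
    moreover have "[1..<d+1] ! j = 1 + j" using True by (intro nth_upt) simp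
    ultimately show ?thesis using True by (simp only: nth_append) simp
  next
    case False
    then have "j - d < k * d" using Suc.prems by auto
    then have "concat (replicate k [1..<d+1]) ! (j - d) = (j - d) mod d + 1" by (rule Suc.IH)
    moreover have "(j - d) mod d = j mod d" using False by (simp add: mod_if le_mod_geq)
    moreover have "concat (replicate (Suc k) [1..<d+1]) = [1..<d+1] @ concat (replicate k [1..<d+1])" by simp
    moreover have "length [1..<d+1] = d" by simp
    ultimately show ?thesis using False by (simp only: nth_append) simp
  qed
qed

lemma Dnth: "j < length (D_list d n) \<Longrightarrow> D_list d n ! j = j mod d + 1"
  using concat_rep_nth[of j "nat \<lceil>real n / real d\<rceil>" d] unfolding Dlen by (simp add: D_list_def)

lemma Tcard:
  assumes t: "t \<in> {1..d}"
  shows "card {j\<in>{0..<k*d}. j mod d + 1 = t} = k"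
proof -
  have "{j\<in>{0..<k*d}. j mod d + 1 = t} = (\<lambda>i. i * d + (t - 1)) ` {0..<k}"
  proof (intro equalityI subsetI)
    fix j assume j: "j \<in> {j\<in>{0..<k*d}. j mod d + 1 = t}"
    have jm: "j mod d = t - 1" using j by auto
    have e: "j = (j div d) * d + (t - 1)" using div_mult_mod_eq[of j d] unfolding jm by simp
    have "j < k * d" using j by simp
    then have lt: "j div d \<in> {0..<k}" by (simp add: less_mult_imp_div_less)
    show "j \<in> (\<lambda>i. i * d + (t - 1)) ` {0..<k}" by (rule image_eqI[where f="\<lambda>i. i * d + (t - 1)", OF e lt])
  next
    fix j assume "j \<in> (\<lambda>i. i * d + (t - 1)) ` {0..<k}"
    then obtain i where i: "i < k" "j = i * d + (t - 1)" by auto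
    have "j < k * d"
    proof -
      have "i * d + (t - 1) < i * d + d" using t by auto
      also have "\<dots> = (i + 1) * d" by simp
      also have "\<dots> \<le> k * d" using i by (intro mult_right_mono) auto
      finally show ?thesis using i by simp
    qed
    moreover have "j mod d + 1 = t"
    proof -
      have "j = (t - 1) + i * d" using i by simp
      then have "j mod d = (t - 1) mod d" using mod_mult_self1[of "t - 1" i d] by simp
      also have "\<dots> = t - 1" using t by (intro mod_less) auto
      finally show ?thesis using t by simp
    qed
    ultimately show "j \<in> {j\<in>{0..<k*d}. j mod d + 1 = t}" by auto
  qed
  moreover have "inj_on (\<lambda>i. i * d + (t - 1)) {0..<k}"
  proof (rule inj_onI)
    fix x y assume "x * d + (t - 1) = y * d + (t - 1)"
    then have "x * d = y * d" by simp
    then show "x = y" using t by simp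
  qed
  ultimately show ?thesis by (simp add: card_image)
qed

lemma kd_ge: assumes "1 \<le> d" shows "n \<le> nat \<lceil>real n / real d\<rceil> * d"
proof -
  have "real n / real d \<le> real (nat \<lceil>real n / real d\<rceil>)" by linarith
  then have "real n / real d * real d \<le> real (nat \<lceil>real n / real d\<rceil>) * real d"
    by (rule mult_right_mono) simp
  then have "real n \<le> real (nat \<lceil>real n / real d\<rceil>) * real d" using assms by simp
  then have "real n \<le> real (nat \<lceil>real n / real d\<rceil> * d)" by (simp only: of_nat_mult)
  then show ?thesis by (simp only: of_nat_le_iff)
qed

lemma FS_Inj: "FS d n = Inj {1..n} (length (D_list d n))"
  unfolding FS_def Inj_def by simp

lemma Inj_nonempty: assumes "n \<le> L" shows "Inj {1..n} L \<noteq> {}"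
proof -
  have "(\<lambda>x. if x \<in> {1..n} then x - 1 else undefined) \<in> Inj {1..n} L"
    using assms unfolding Inj_def by (auto simp: inj_on_def)
  then show ?thesis by blast
qed




lemma key_ineq:
  fixes K D :: real
  assumes "K \<ge> 0" "D \<ge> 1" "K * D \<ge> 2"
  shows "K * (K - 1) / (K * D * (K * D - 1)) \<le> 1 / D^2"
proof -
  have pos: "K * D * (K * D - 1) > 0" using assms by (simp add: mult_pos_pos)
  have "K * (K - 1) * D^2 \<le> K * D * (K * D - 1)"
  proof -
    have "K * D \<le> K * D^2" using assms by (simp add: power2_eq_square mult_left_mono)
    then show ?thesis by (simp add: algebra_simps power2_eq_square)
  qed
  then show ?thesis using pos assms by (simp add: field_simps)
qed

lemma SSSE_moments:
  assumes d: "1 \<le> d" and dn: "d \<le> n" and t: "t \<in> {1..d}"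
  shows "measure_pmf.expectation (SSSE_pmf d n) (row_nnz n t) = n / d"
    and "measure_pmf.variance (SSSE_pmf d n) (row_nnz n t) \<le> n / d - n / (real d)^2"
proof -
  define k where "k = nat \<lceil>real n / real d\<rceil>"
  define L where "L = length (D_list d n)"
  have Lk: "L = k * d" unfolding L_def k_def by (rule Dlen)
  have nL: "n \<le> L" unfolding Lk k_def by (rule kd_ge[OF d])
  have n1: "n \<ge> 1" using d dn by simp
  have Lpos: "L > 0" using nL n1 by simp
  have kpos: "k > 0" using Lpos Lk by simp
  define F where "F = Inj {1..n} L"
  have FS: "FS d n = F" unfolding F_def L_def by (rule FS_Inj)
  have fin: "finite F" unfolding F_def by (rule Inj_finite) simp
  have ne: "F \<noteq> {}" unfolding F_def by (rule Inj_nonempty[OF nL])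
  define T where "T = {j\<in>{0..<L}. D_list d n ! j = t}"
  have T_eq: "T = {j\<in>{0..<k*d}. j mod d + 1 = t}"
    unfolding T_def using Dnth[of _ d n] unfolding L_def[symmetric] Lk by auto
  have cT: "card T = k" unfolding T_eq by (rule Tcard[OF t])
  have TL: "T \<subseteq> {0..<L}" unfolding T_def by auto
  have setc: "{f\<in>F. D_list d n ! f c = t} = {f\<in>F. f c \<in> T}" if "c \<in> {1..n}" for c
    using Inj_range[of _ "{1..n}" L c] that unfolding F_def T_def by auto
  define a :: real where "a = real k * card F / L"
  define b :: real where "b = real k * (real k - 1) * card F / (real L * (real L - 1))"
  have ha: "real (card {f\<in>F. D_list d n ! f c = t}) = a" if c: "c \<in> {1..n}" for c
  proof -
    have "real (card {f\<in>F. f c \<in> T}) * L = card T * card F"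
      unfolding F_def by (rule single_val[OF _ c TL]) simp
    then show ?thesis unfolding setc[OF c] a_def cT using Lpos by (simp add: field_simps)
  qed
  have hb: "real (card {f\<in>F. D_list d n ! f c = t \<and> D_list d n ! f c' = t}) = b"
    if c: "c \<in> {1..n}" "c' \<in> {1..n}" "c \<noteq> c'" for c c'
  proof -
    have "n \<ge> 2" using c by auto
    then have L2: "real L * (real L - 1) > 0" using nL by simp
    have "{f\<in>F. D_list d n ! f c = t \<and> D_list d n ! f c' = t} = {f\<in>F. f c \<in> T \<and> f c' \<in> T}"
      using setc[OF c(1)] setc[OF c(2)] by blast
    moreover have "real (card {f\<in>F. f c \<in> T \<and> f c' \<in> T}) * (L * (L - 1)) = card T * (card T - 1) * card F"
      unfolding F_def by (rule pair_val[OF _ c TL]) simp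
    moreover have "real (L - Suc 0) = real L - 1" "real (k - Suc 0) = real k - 1"
      using Lpos kpos by (simp_all add: of_nat_diff)
    ultimately show ?thesis unfolding b_def cT using L2 by (simp add: field_simps)
  qed
  note M = uniform_moments[OF fin ne finite_atLeastAtMost[of 1 n], where P="\<lambda>f c. D_list d n ! f c = t" and a=a and b=b, OF ha hb]
  have ex: "measure_pmf.expectation (SSSE_pmf d n) (row_nnz n t) = n / d"
    using exp_SSSE[where g="\<lambda>x. x" and d=d and n=n and t=t] M(1) unfolding FS
    using Lpos ne fin kpos d by (simp add: a_def Lk field_simps)
  then show "measure_pmf.expectation (SSSE_pmf d n) (row_nnz n t) = n / d" .
  have fs: "finite (set_pmf (pmf_of_set F))" using fin ne by simp
  have "measure_pmf.variance (SSSE_pmf d n) (row_nnz n t)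
       = measure_pmf.variance (pmf_of_set F) (\<lambda>f. real (card {c\<in>{1..n}. D_list d n ! f c = t}))"
    using exp_SSSE[where g="\<lambda>x. (x - n / d)^2" and d=d and n=n and t=t]
          exp_SSSE[where g="\<lambda>x. x" and d=d and n=n and t=t] ex unfolding FS by simp
  also have "\<dots> = measure_pmf.expectation (pmf_of_set F) (\<lambda>f. (real (card {c\<in>{1..n}. D_list d n ! f c = t}))^2)
     - (measure_pmf.expectation (pmf_of_set F) (\<lambda>f. real (card {c\<in>{1..n}. D_list d n ! f c = t})))^2"
    by (rule measure_pmf.variance_eq) (auto intro: integrable_measure_pmf_finite[OF fs])
  also have "\<dots> \<le> n / d - n / (real d)^2"
  proof -
    define r where "r = real k * (real k - 1) / (real L * (real L - 1))"
    have cF: "real (card F) > 0" using fin ne by (simp add: card_gt_0_iff)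
    have E1: "measure_pmf.expectation (pmf_of_set F) (\<lambda>f. real (card {c\<in>{1..n}. D_list d n ! f c = t})) = n / d"
      using M(1) cF Lpos kpos d by (simp add: a_def Lk field_simps)
    have aF: "a / card F = 1 / d" using cF Lpos kpos d by (simp add: a_def Lk field_simps)
    have bF: "b = r * card F" unfolding b_def r_def by simp
    have aF': "a = card F / d" using aF cF by (simp add: field_simps)
    have E2: "measure_pmf.expectation (pmf_of_set F) (\<lambda>f. (real (card {c\<in>{1..n}. D_list d n ! f c = t}))^2)
        = n / d + real n * (real n - 1) * r"
    proof -
      have "real (card {1..n} - 1) = real n - 1" using n1 by (simp add: of_nat_diff)
      then have "measure_pmf.expectation (pmf_of_set F) (\<lambda>f. (real (card {c\<in>{1..n}. D_list d n ! f c = t}))^2)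
          = (real n * a + real n * (real n - 1) * b) / card F" using M(2) by simp
      also have "\<dots> = (real n / d + real n * (real n - 1) * r) * card F / card F"
        unfolding aF' bF by (simp add: algebra_simps)
      also have "\<dots> = real n / d + real n * (real n - 1) * r" using cF by simp
      finally show ?thesis .
    qed
    have rb: "real n * (real n - 1) * r \<le> real n * (real n - 1) / (real d)^2"
    proof (cases "n \<ge> 2")
      case True
      have "r \<le> 1 / (real d)^2" unfolding r_def Lk of_nat_mult
      proof (rule key_ineq)
        have "2 \<le> k * d" using True nL Lk by simp
        then have "real 2 \<le> real (k * d)" by (simp only: of_nat_le_iff)
        then show "2 \<le> real k * real d" by simp
      qed (use d in auto)
      moreover have "real n * (real n - 1) \<ge> 0" using n1 by simp
      ultimately have "real n * (real n - 1) * r \<le> real n * (real n - 1) * (1 / (real d)^2)"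
        by (intro mult_left_mono)
      then show ?thesis by simp
    next
      case False then have "n = 1" using n1 by simp
      then show ?thesis by simp
    qed
    have "n / d + real n * (real n - 1) * r - (n / d)^2 \<le> n / d + real n * (real n - 1) / (real d)^2 - (n / d)^2"
      using rb by linarith
    also have "\<dots> = n / d - n / (real d)^2" using d by (simp add: field_simps power2_eq_square)
    finally show ?thesis unfolding E1 E2 .
  qed
  finally show "measure_pmf.variance (SSSE_pmf d n) (row_nnz n t) \<le> n / d - n / (real d)^2" .
qed


theorem theorem1:
  fixes d n t :: nat
  assumes "1 \<le> d" and "d \<le> n" and "t \<in> {1..d}"
  shows "measure_pmf.expectation (SSSE_pmf d n) (row_nnz n t)
           = measure_pmf.expectation (SE_pmf d n) (row_nnz n t)
       \<and> measure_pmf.variance (SSSE_pmf d n) (row_nnz n t)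
           \<le> measure_pmf.variance (SE_pmf d n) (row_nnz n t)"
  using SSSE_moments[OF assms] SE_moments[OF assms(1,3), of n] by simp

end
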